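(* Let $(E,\mathcal{E},\nu)$ be a $\sigma$-finite measure space in which every singleton set is measurable with positive measure, $\phi$ a Young function satisfying the $\Delta_2$-condition, $w$ a weight function, and $\Psi:E\to E$ a non-singular measurable transformation such that the composition operator $C_\Psi f=f\circ\Psi$ is a bounded linear operator on the Orlicz-Lorentz space $L_{(\phi,w)}$. Let $m\ge0$ be an integer. If the map $\Psi|_{\Psi^m(E)}:\Psi^m(E)\to\Psi^m(E)$ is not injective, then $\mathcal{D}(C_\Psi)>m$.
   Context: A Young function is a convex $\phi:[0,\infty)\to[0,\infty)$ with $\phi(x)=0\iff x=0$ and $\lim_{x\to\infty}\phi(x)=\infty$; $\Delta_2$-condition: $\phi(2x)\le k\phi(x)$ for some $k>0$ and all $x>0$. A weight function is a non-increasing locally integrable $w:(0,\infty)\to(0,\infty)$ with $\int_0^\infty w=\infty$. For measurable $f$, $\nu_f(s)=\nu\{|f|>s\}$, $f^*(t)=\inf\{s>0:\nu_f(s)\le t\}$; $L_{(\phi,w)}$ is the space of measurable $f:E\to\mathbb{C}$ with $\int_0^\infty\phi(\alpha f^*(t))w(t)\,dt<\infty$ for some $\alpha>0$, with the Luxemburg norm. $\Psi$ non-singular: $\nu(\Psi^{-1}(S))=0$ whenever $\nu(S)=0$; $\Psi^0=\mathrm{id}$. The descent $\mathcal{D}(T)$ is the smallest integer $m$ with $\mathcal{R}(T^{m+1})=\mathcal{R}(T^m)$ ($\mathcal{R}$ = range), and $\infty$ if no such $m$ exists. *)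

theory Defs
  imports "HOL-Analysis.Analysis"
begin

definition young_function :: "(real \<Rightarrow> real) \<Rightarrow> bool" where
  "young_function \<phi> \<longleftrightarrow>
     convex_on {0..} \<phi> \<and> (\<forall>x\<ge>0. \<phi> x \<ge> 0) \<and>
     (\<forall>x\<ge>0. \<phi> x = 0 \<longleftrightarrow> x = 0) \<and> filterlim \<phi> at_top at_top"

definition delta2 :: "(real \<Rightarrow> real) \<Rightarrow> bool" where
  "delta2 \<phi> \<longleftrightarrow> (\<exists>k>0. \<forall>x>0. \<phi> (2 * x) \<le> k * \<phi> x)"

definition weight_function :: "(real \<Rightarrow> real) \<Rightarrow> bool" where
  "weight_function w \<longleftrightarrow>
     (\<forall>t>0. w t > 0) \<and>
     (\<forall>s t. 0 < s \<longrightarrow> s \<le> t \<longrightarrow> w t \<le> w s) \<and>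
     (\<forall>t>0. set_integrable lborel {0<..t} w) \<and>
     (\<integral>\<^sup>+ t. ennreal (w t) * indicator {0<..} t \<partial>lborel) = \<infinity>"

definition distrib_fun :: "'a measure \<Rightarrow> ('a \<Rightarrow> complex) \<Rightarrow> real \<Rightarrow> ennreal" where
  "distrib_fun M f s = emeasure M {x \<in> space M. cmod (f x) > s}"

text \<open>Decreasing rearrangement f*(t) = inf{s>0. nu_f(s) \<le> t} (value oo if the set is empty).\<close>
definition rearr :: "'a measure \<Rightarrow> ('a \<Rightarrow> complex) \<Rightarrow> real \<Rightarrow> ennreal" where
  "rearr M f t = Inf {ennreal s | s. s > 0 \<and> distrib_fun M f s \<le> ennreal t}"

definition OL_modular ::
  "'a measure \<Rightarrow> (real \<Rightarrow> real) \<Rightarrow> (real \<Rightarrow> real) \<Rightarrow> real \<Rightarrow> ('a \<Rightarrow> complex) \<Rightarrow> ennreal" where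
  "OL_modular M \<phi> w \<alpha> f =
     (\<integral>\<^sup>+ t. (if rearr M f t = \<infinity> then \<infinity>
               else ennreal (\<phi> (\<alpha> * enn2real (rearr M f t)) * w t)) * indicator {0<..} t \<partial>lborel)"

text \<open>Orlicz-Lorentz space; functions are taken extensional (zero outside space M).\<close>
definition OL_space ::
  "'a measure \<Rightarrow> (real \<Rightarrow> real) \<Rightarrow> (real \<Rightarrow> real) \<Rightarrow> ('a \<Rightarrow> complex) set" where
  "OL_space M \<phi> w = {f \<in> borel_measurable M. (\<forall>x. x \<notin> space M \<longrightarrow> f x = 0) \<and>
                       (\<exists>\<alpha>>0. OL_modular M \<phi> w \<alpha> f < \<infinity>)}"

definition lux_norm ::
  "'a measure \<Rightarrow> (real \<Rightarrow> real) \<Rightarrow> (real \<Rightarrow> real) \<Rightarrow> ('a \<Rightarrow> complex) \<Rightarrow> real" where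
  "lux_norm M \<phi> w f = Inf {\<epsilon>. \<epsilon> > 0 \<and> OL_modular M \<phi> w (1 / \<epsilon>) f \<le> 1}"

definition comp_op :: "'a measure \<Rightarrow> ('a \<Rightarrow> 'a) \<Rightarrow> ('a \<Rightarrow> complex) \<Rightarrow> ('a \<Rightarrow> complex)" where
  "comp_op M \<Psi> f = (\<lambda>x. if x \<in> space M then f (\<Psi> x) else 0)"

definition nonsingular :: "'a measure \<Rightarrow> ('a \<Rightarrow> 'a) \<Rightarrow> bool" where
  "nonsingular M \<Psi> \<longleftrightarrow>
     (\<forall>S \<in> sets M. emeasure M S = 0 \<longrightarrow> emeasure M (\<Psi> -` S \<inter> space M) = 0)"

definition descent :: "('b \<Rightarrow> 'b) \<Rightarrow> 'b set \<Rightarrow> enat" where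
  "descent T X = (if \<exists>m. (T ^^ Suc m) ` X = (T ^^ m) ` X
                  then enat (LEAST m. (T ^^ Suc m) ` X = (T ^^ m) ` X) else \<infinity>)"

end

theory Submission
  imports Defs
begin

lemma comp_op_app: "x \<in> space M \<Longrightarrow> comp_op M \<Psi> f x = f (\<Psi> x)"
  by (simp add: comp_op_def)

lemma comp_op_pow:
  assumes "\<Psi> \<in> measurable M M" "x \<in> space M"
  shows "(comp_op M \<Psi> ^^ n) h x = h ((\<Psi> ^^ n) x)"
  using assms(2)
proof (induction n arbitrary: x)
  case 0 then show ?case by simp
next
  case (Suc n)
  have px: "\<Psi> x \<in> space M" by (rule measurable_space[OF assms(1) Suc.prems])
  have "(comp_op M \<Psi> ^^ Suc n) h x = (comp_op M \<Psi> ^^ n) h (\<Psi> x)"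
    by (simp only: funpow.simps(2) o_apply comp_op_app[OF Suc.prems])
  also have "\<dots> = h ((\<Psi> ^^ n) (\<Psi> x))" using Suc.IH px by blast
  also have "\<dots> = h ((\<Psi> ^^ Suc n) x)" by (simp add: funpow_Suc_right del: funpow.simps)
  finally show ?case .
qed

lemma img_step: "(T ^^ Suc n) ` X = T ` ((T ^^ n) ` X)"
  by (simp add: image_comp)

lemma chain_eq:
  fixes F :: "'c \<Rightarrow> 'c"
  assumes "(F ^^ Suc k) ` X = (F ^^ k) ` X"
  shows "(F ^^ Suc (k + j)) ` X = (F ^^ (k + j)) ` X"
proof (induction j)
  case 0 then show ?case using assms by simp
next
  case (Suc j)
  have "(F ^^ Suc (k + Suc j)) ` X = F ` ((F ^^ Suc (k + j)) ` X)"
    using img_step[where T=F and n="Suc (k+j)" and X=X] by simp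
  also have "\<dots> = F ` ((F ^^ (k + j)) ` X)" using Suc.IH by simp
  also have "\<dots> = (F ^^ (k + Suc j)) ` X" using img_step[where T=F and n="k+j" and X=X] by simp
  finally show ?case .
qed

lemma Inf_pos_ennreal: "Inf {ennreal s | s. s > 0} = 0"
proof -
  have "Inf {ennreal s | s. s > 0} \<le> 0 + ennreal e" if "e > 0" for e
    using that by (auto intro!: Inf_lower)
  then have "Inf {ennreal s | s. s > 0} \<le> 0" by (rule ennreal_le_epsilon)
  then show ?thesis by simp
qed

lemma Inf_ge1_ennreal: "Inf {ennreal s | s. s \<ge> 1} = 1"
proof (rule antisym)
  show "Inf {ennreal s | s. s \<ge> 1} \<le> 1" by (rule Inf_lower) (auto intro: exI[of _ 1])
  show "1 \<le> Inf {ennreal s | s. s \<ge> 1}"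
    by (rule Inf_greatest) (auto simp: ennreal_ge_1 ennreal_leI)
qed


lemma pow_space:
  assumes "\<Psi> \<in> measurable M M" "x \<in> space M"
  shows "(\<Psi> ^^ n) x \<in> space M"
proof (induction n)
  case 0 then show ?case using assms(2) by simp
next
  case (Suc n)
  then show ?case using measurable_space[OF assms(1) Suc.IH] by simp
qed

theorem corollary4p4:
  fixes M :: "'a measure" and \<phi> w :: "real \<Rightarrow> real" and \<Psi> :: "'a \<Rightarrow> 'a" and m :: nat
  assumes "sigma_finite_measure M"
    and "\<forall>x \<in> space M. {x} \<in> sets M \<and> emeasure M {x} > 0"
    and "young_function \<phi>" and "delta2 \<phi>"
    and "weight_function w"
    and "\<Psi> \<in> measurable M M" and "nonsingular M \<Psi>"
    and "\<forall>f \<in> OL_space M \<phi> w. comp_op M \<Psi> f \<in> OL_space M \<phi> w"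
    and "\<exists>C. \<forall>f \<in> OL_space M \<phi> w. lux_norm M \<phi> w (comp_op M \<Psi> f) \<le> C * lux_norm M \<phi> w f"
    and "\<not> inj_on \<Psi> ((\<Psi> ^^ m) ` space M)"
  shows "descent (comp_op M \<Psi>) (OL_space M \<phi> w) > enat m"
proof -
  define X where "X = OL_space M \<phi> w"
  define T where "T = comp_op M \<Psi>"
  have meas: "\<Psi> \<in> measurable M M" by fact
  obtain a b where ab: "a \<in> (\<Psi> ^^ m) ` space M" "b \<in> (\<Psi> ^^ m) ` space M" "\<Psi> a = \<Psi> b" "a \<noteq> b"
    using assms(10) unfolding inj_on_def by blast
  obtain x0 where x0: "x0 \<in> space M" "a = (\<Psi> ^^ m) x0" using ab(1) by blast
  obtain y0 where y0: "y0 \<in> space M" "b = (\<Psi> ^^ m) y0" using ab(2) by blast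
  have aS: "a \<in> space M" using x0 pow_space[OF meas] by simp
  have aset: "{a} \<in> sets M" and apos: "emeasure M {a} > 0" using assms(2) aS by auto
  obtain A :: "nat \<Rightarrow> 'a set" where A: "range A \<subseteq> sets M" "\<Union>(range A) = space M" "\<And>i. emeasure M (A i) \<noteq> \<infinity>"
  proof (rule sigma_finite_measure.sigma_finite[OF assms(1)])
    fix A :: "nat \<Rightarrow> 'a set" assume h: "range A \<subseteq> sets M" "\<Union>(range A) = space M" "\<And>i. emeasure M (A i) \<noteq> \<infinity>"
    show ?thesis by (rule that[OF h(1) h(2) h(3)])
  qed
  obtain i where B: "a \<in> A i" using A(2) aS by blast
  have "emeasure M {a} \<le> emeasure M (A i)"
    by (rule emeasure_mono) (use B A(1) in auto)
  then have afin: "emeasure M {a} \<noteq> \<infinity>" using A(3)[of i] by (auto simp: top_unique)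
  define cr where "cr = enn2real (emeasure M {a})"
  have c_eq: "emeasure M {a} = ennreal cr" using afin cr_def by (simp add: ennreal_enn2real_if)
  have crpos: "cr > 0" using apos c_eq by simp
  have phi0: "\<phi> 0 = 0" and phi1: "\<phi> 1 \<ge> 0"
    using assms(3) unfolding young_function_def by auto
  have wpos: "\<And>t. t > 0 \<Longrightarrow> w t > 0" and wint: "set_integrable lborel {0<..cr} w"
    using assms(5) crpos unfolding weight_function_def by auto
  define g :: "'a \<Rightarrow> complex" where "g = (\<lambda>x. if x \<in> {a} then 1 else 0)"
  have dist: "distrib_fun M g s = (if s < 1 then ennreal cr else 0)" if "s > 0" for s
  proof -
    have "{x \<in> space M. cmod (g x) > s} = (if s < 1 then {a} else {})"
      using that aS by (auto simp: g_def)
    then show ?thesis unfolding distrib_fun_def using c_eq by simp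
  qed
  have rearr_hi: "rearr M g t = 0" if "cr \<le> t" for t
  proof -
    have "{ennreal s | s. s > 0 \<and> distrib_fun M g s \<le> ennreal t} = {ennreal s | s. s > 0}"
      using dist that by (auto simp: ennreal_leI)
    then show ?thesis unfolding rearr_def using Inf_pos_ennreal by simp
  qed
  have rearr_lo: "rearr M g t = 1" if "t < cr" for t
  proof -
    have nle: "\<not> ennreal cr \<le> ennreal t"
      using that crpos by (cases "t \<ge> 0") (auto simp: ennreal_le_iff2 ennreal_neg)
    have "{ennreal s | s. s > 0 \<and> distrib_fun M g s \<le> ennreal t} = {ennreal s | s. s \<ge> 1}"
    proof (intro equalityI subsetI)
      fix y assume "y \<in> {ennreal s | s. s > 0 \<and> distrib_fun M g s \<le> ennreal t}"
      then obtain s where "y = ennreal s" "s > 0" "distrib_fun M g s \<le> ennreal t" by blast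
      then show "y \<in> {ennreal s | s. s \<ge> 1}" using dist[of s] nle
        by (cases "s < 1") auto
    next
      fix y assume "y \<in> {ennreal s | s. s \<ge> 1}"
      then obtain s where "y = ennreal s" "s \<ge> 1" by blast
      then show "y \<in> {ennreal s | s. s > 0 \<and> distrib_fun M g s \<le> ennreal t}"
        using dist[of s] by auto
    qed
    then show ?thesis unfolding rearr_def using Inf_ge1_ennreal by simp
  qed
  have wint2: "set_integrable lborel {0<..cr} (\<lambda>t. \<phi> 1 * w t)"
    using wint by (rule set_integrable_mult_right)
  have fin: "(\<integral>\<^sup>+ t. ennreal (norm (indicator {0<..cr} t *\<^sub>R (\<phi> 1 * w t))) \<partial>lborel) < \<infinity>"
    using wint2 unfolding set_integrable_def integrable_iff_bounded by simp
  have pt: "(if rearr M g t = \<infinity> then \<infinity>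
               else ennreal (\<phi> (1 * enn2real (rearr M g t)) * w t)) * indicator {0<..} t
        \<le> ennreal (norm (indicator {0<..cr} t *\<^sub>R (\<phi> 1 * w t)))" for t
  proof (cases "t > 0")
    case True
    show ?thesis
    proof (cases "t < cr")
      case True
      then show ?thesis using rearr_lo[OF True] \<open>t > 0\<close> phi1 wpos[of t] by simp
    next
      case False
      then show ?thesis using rearr_hi[of t] \<open>t > 0\<close> phi0 by simp
    qed
  qed simp
  have "OL_modular M \<phi> w 1 g < \<infinity>"
    unfolding OL_modular_def by (rule le_less_trans[OF nn_integral_mono fin]) (rule pt)
  moreover have "g \<in> borel_measurable M"
    unfolding g_def by (rule measurable_If_set) (use aset aS in auto)
  moreover have "\<forall>x. x \<notin> space M \<longrightarrow> g x = 0" using aS by (auto simp: g_def)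
  ultimately have gX: "g \<in> X" unfolding X_def OL_space_def using zero_less_one by blast
  define f where "f = (T ^^ m) g"
  have neq: "(T ^^ Suc m) ` X \<noteq> (T ^^ m) ` X"
  proof
    assume eq: "(T ^^ Suc m) ` X = (T ^^ m) ` X"
    have "f \<in> (T ^^ m) ` X" using gX f_def by blast
    then obtain h where h: "f = (T ^^ Suc m) h" using eq by auto
    have "f x0 = g a" unfolding f_def T_def using comp_op_pow[OF meas x0(1)] x0(2) by simp
    moreover have "f x0 = h (\<Psi> a)"
    proof -
      have "f x0 = h ((\<Psi> ^^ Suc m) x0)" unfolding h T_def by (rule comp_op_pow[OF meas x0(1)])
      then show ?thesis using x0(2) by simp
    qed
    moreover have "f y0 = g b" unfolding f_def T_def using comp_op_pow[OF meas y0(1)] y0(2) by simp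
    moreover have "f y0 = h (\<Psi> b)"
    proof -
      have "f y0 = h ((\<Psi> ^^ Suc m) y0)" unfolding h T_def by (rule comp_op_pow[OF meas y0(1)])
      then show ?thesis using y0(2) by simp
    qed
    ultimately show False using ab(3,4) by (simp add: g_def)
  qed
  have allk: "(T ^^ Suc k) ` X \<noteq> (T ^^ k) ` X" if "k \<le> m" for k
  proof
    assume "(T ^^ Suc k) ` X = (T ^^ k) ` X"
    from chain_eq[OF this, of "m - k"] that have "(T ^^ Suc m) ` X = (T ^^ m) ` X" by simp
    with neq show False by simp
  qed
  show ?thesis
  proof (cases "\<exists>n. (T ^^ Suc n) ` X = (T ^^ n) ` X")
    case True
    define n where "n = (LEAST n. (T ^^ Suc n) ` X = (T ^^ n) ` X)"
    have "(T ^^ Suc n) ` X = (T ^^ n) ` X" unfolding n_def using True by (rule LeastI_ex)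
    then have "n > m" using allk by (meson not_le)
    then show ?thesis using True unfolding descent_def X_def[symmetric] T_def[symmetric] n_def by simp
  next
    case False
    then show ?thesis unfolding descent_def X_def[symmetric] T_def[symmetric] by simp
  qed
qed

end
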